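(* (a) If $V_T(\cdot)$ is continuous on $Y$ for every natural number $T$, then $\limsup_{T\to\infty}V_T(y_0)\le k^*(y_0)$ for all $y_0\in Y$. (b) If $h_\alpha(\cdot)$ is continuous on $Y$ for every $\alpha\in(0,1)$, then $\limsup_{\alpha\uparrow1}h_\alpha(y_0)\le k^*(y_0)$ for all $y_0\in Y$.
   Context: Let $Y\subset\mathbb{R}^m$ be nonempty compact, $U_0$ a compact metric space, $U(\cdot):Y\rightsquigarrow U_0$ upper semicontinuous and compact-valued, and $f:\mathbb{R}^m\times U_0\to\mathbb{R}^m$, $k:\mathbb{R}^m\times U_0\to\mathbb{R}$ continuous. Put $A(y):=\{u\in U(y): f(y,u)\in Y\}$ and $G:=\{(y,u):y\in Y,\ u\in A(y)\}$. Standing assumption: $A(y)\ne\emptyset$ for all $y\in Y$. For $y_0\in Y$, an admissible process on $\{0,\dots,T-1\}$ (respectively on $\{0,1,\dots\}$) is a pair $(y(t),u(t))$ with $y(0)=y_0$, $u(t)\in A(y(t))$ and $y(t+1)=f(y(t),u(t))$. The controls of such processes form $\mathcal U_T(y_0)$ (respectively $\mathcal U(y_0)$). Value functions: $$V_T(y_0):=\frac1T\min_{u\in\mathcal U_T(y_0)}\sum_{t=0}^{T-1}k(y(t),u(t)),\qquad h_\alpha(y_0):=(1-\alpha)\min_{u\in\mathcal U(y_0)}\sum_{t=0}^{\infty}\alpha^tk(y(t),u(t)).$$ LP value: - $\mathcal P(G)$ denotes the Borel probability measures on $G$ and $\mathcal M_+(G)$ the finite nonnegative Borel measures on $G$. -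 $W:=\{\gamma\in\mathcal P(G):\int_G(\varphi(f(y,u))-\varphi(y))\,d\gamma=0\ \forall\varphi\in C(Y)\}$. - $k^*(y_0)$ is the infimum of $\int_Gk(y,u)\,\gamma(dy,du)$ over pairs $(\gamma,\xi)\in\mathcal P(G)\times\mathcal M_+(G)$ with $\gamma\in W$ and $\int_G(\varphi(y_0)-\varphi(y))\,\gamma(dy,du)+\int_G(\varphi(f(y,u))-\varphi(y))\,\xi(dy,du)=0$ for all $\varphi\in C(Y)$. *)

theory Defs
  imports "HOL-Probability.Probability"
begin

definition Adm :: "'a set \<Rightarrow> ('a \<Rightarrow> 'b set) \<Rightarrow> ('a \<times> 'b \<Rightarrow> 'a) \<Rightarrow> 'a \<Rightarrow> 'b set" where
  "Adm Y U f y = {u \<in> U y. f (y, u) \<in> Y}"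

definition Gset :: "'a set \<Rightarrow> ('a \<Rightarrow> 'b set) \<Rightarrow> ('a \<times> 'b \<Rightarrow> 'a) \<Rightarrow> ('a \<times> 'b) set" where
  "Gset Y U f = {(y, u). y \<in> Y \<and> u \<in> Adm Y U f y}"

primrec traj :: "('a \<times> 'b \<Rightarrow> 'a) \<Rightarrow> 'a \<Rightarrow> (nat \<Rightarrow> 'b) \<Rightarrow> nat \<Rightarrow> 'a" where
  "traj f y0 u 0 = y0"
| "traj f y0 u (Suc t) = f (traj f y0 u t, u t)"

definition ctrlsT :: "'a set \<Rightarrow> ('a \<Rightarrow> 'b set) \<Rightarrow> ('a \<times> 'b \<Rightarrow> 'a) \<Rightarrow> nat \<Rightarrow> 'a \<Rightarrow> (nat \<Rightarrow> 'b) set" where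
  "ctrlsT Y U f T y0 = {u. \<forall>t<T. u t \<in> Adm Y U f (traj f y0 u t)}"

definition ctrls :: "'a set \<Rightarrow> ('a \<Rightarrow> 'b set) \<Rightarrow> ('a \<times> 'b \<Rightarrow> 'a) \<Rightarrow> 'a \<Rightarrow> (nat \<Rightarrow> 'b) set" where
  "ctrls Y U f y0 = {u. \<forall>t. u t \<in> Adm Y U f (traj f y0 u t)}"

definition VT :: "'a set \<Rightarrow> ('a \<Rightarrow> 'b set) \<Rightarrow> ('a \<times> 'b \<Rightarrow> 'a) \<Rightarrow> ('a \<times> 'b \<Rightarrow> real) \<Rightarrow> nat \<Rightarrow> 'a \<Rightarrow> real" where
  "VT Y U f k T y0 = (1 / real T) *
     Inf ((\<lambda>u. \<Sum>t<T. k (traj f y0 u t, u t)) ` ctrlsT Y U f T y0)"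

definition hdisc :: "'a set \<Rightarrow> ('a \<Rightarrow> 'b set) \<Rightarrow> ('a \<times> 'b \<Rightarrow> 'a) \<Rightarrow> ('a \<times> 'b \<Rightarrow> real) \<Rightarrow> real \<Rightarrow> 'a \<Rightarrow> real" where
  "hdisc Y U f k \<alpha> y0 = (1 - \<alpha>) *
     Inf ((\<lambda>u. \<Sum>t. \<alpha> ^ t * k (traj f y0 u t, u t)) ` ctrls Y U f y0)"

definition usc_on :: "'a::metric_space set \<Rightarrow> ('a \<Rightarrow> 'b::topological_space set) \<Rightarrow> bool" where
  "usc_on Y U \<longleftrightarrow> (\<forall>y\<in>Y. \<forall>V. open V \<and> U y \<subseteq> V \<longrightarrow>
      (\<exists>e>0. \<forall>y'\<in>Y. dist y' y < e \<longrightarrow> U y' \<subseteq> V))"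

definition Wset :: "'a::metric_space set \<Rightarrow> ('a \<Rightarrow> 'b::metric_space set) \<Rightarrow> ('a \<times> 'b \<Rightarrow> 'a) \<Rightarrow> ('a \<times> 'b) measure set" where
  "Wset Y U f = {\<gamma>. prob_space \<gamma> \<and> sets \<gamma> = sets (restrict_space borel (Gset Y U f)) \<and>
      (\<forall>\<phi>::'a \<Rightarrow> real. continuous_on Y \<phi> \<longrightarrow>
         integral\<^sup>L \<gamma> (\<lambda>p. \<phi> (f p) - \<phi> (fst p)) = 0)}"

text \<open>The LP value k*(y0) (infimum in the extended reals; inf of the empty set is +infinity).\<close>
definition kstar :: "'a::metric_space set \<Rightarrow> ('a \<Rightarrow> 'b::metric_space set) \<Rightarrow> ('a \<times> 'b \<Rightarrow> 'a) \<Rightarrow> ('a \<times> 'b \<Rightarrow> real) \<Rightarrow> 'a \<Rightarrow> ereal" where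
  "kstar Y U f k y0 = Inf {ereal (integral\<^sup>L \<gamma> k) | \<gamma> \<xi>.
      \<gamma> \<in> Wset Y U f \<and> finite_measure \<xi> \<and>
      sets \<xi> = sets (restrict_space borel (Gset Y U f)) \<and>
      (\<forall>\<phi>::'a \<Rightarrow> real. continuous_on Y \<phi> \<longrightarrow>
         integral\<^sup>L \<gamma> (\<lambda>p. \<phi> y0 - \<phi> (fst p)) + integral\<^sup>L \<xi> (\<lambda>p. \<phi> (f p) - \<phi> (fst p)) = 0)}"

end

theory Submission
  imports Defs
begin

definition SS :: "'a set \<Rightarrow> ('a \<Rightarrow> 'b set) \<Rightarrow> ('a \<times> 'b \<Rightarrow> 'a) \<Rightarrow> ('a \<times> 'b \<Rightarrow> real) \<Rightarrow> nat \<Rightarrow> 'a \<Rightarrow> real" where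
  "SS Y U f k T y0 = Inf ((\<lambda>u. \<Sum>t<T. k (traj f y0 u t, u t)) ` ctrlsT Y U f T y0)"

definition HH :: "'a set \<Rightarrow> ('a \<Rightarrow> 'b set) \<Rightarrow> ('a \<times> 'b \<Rightarrow> 'a) \<Rightarrow> ('a \<times> 'b \<Rightarrow> real) \<Rightarrow> real \<Rightarrow> 'a \<Rightarrow> real" where
  "HH Y U f k \<alpha> y0 = Inf ((\<lambda>u. \<Sum>t. \<alpha> ^ t * k (traj f y0 u t, u t)) ` ctrls Y U f y0)"

lemma traj_inY:
  assumes "y \<in> Y" "u \<in> ctrlsT Y U f T y" "t \<le> T"
  shows "traj f y u t \<in> Y"
  using assms(3)
proof (induction t)
  case 0 then show ?case using assms by simp
next
  case (Suc t)
  then have "u t \<in> Adm Y U f (traj f y u t)" using assms(2) unfolding ctrlsT_def by auto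
  then show ?case by (simp add: Adm_def)
qed

lemma traj_G:
  assumes "y \<in> Y" "u \<in> ctrlsT Y U f T y" "t < T"
  shows "(traj f y u t, u t) \<in> Gset Y U f"
  using traj_inY[OF assms(1,2), of t] assms unfolding ctrlsT_def Gset_def by auto

lemma ctrls_sub: "ctrls Y U f y \<subseteq> ctrlsT Y U f T y"
  unfolding ctrls_def ctrlsT_def by auto

lemma ex_ctrl:
  assumes A1: "\<And>y. y \<in> Y \<Longrightarrow> Adm Y U f y \<noteq> {}" and "y \<in> Y"
  shows "\<exists>u. u \<in> ctrls Y U f y"
proof -
  define sel where "sel = (\<lambda>z. SOME v. v \<in> Adm Y U f z)"
  have sel: "sel z \<in> Adm Y U f z" if "z \<in> Y" for z
    using A1[OF that] unfolding sel_def by (simp add: some_in_eq)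
  define z where "z = rec_nat y (\<lambda>n zn. f (zn, sel zn))"
  have z0: "z 0 = y" and zS: "\<And>n. z (Suc n) = f (z n, sel (z n))" by (simp_all add: z_def)
  have zY: "z n \<in> Y" for n
  proof (induction n)
    case 0 then show ?case using z0 assms by simp
  next
    case (Suc n) then show ?case using sel[OF Suc] zS by (simp add: Adm_def)
  qed
  define u where "u = (\<lambda>n. sel (z n))"
  have tr: "traj f y u n = z n" for n
    by (induction n) (simp_all add: z0 zS u_def)
  have "u \<in> ctrls Y U f y" unfolding ctrls_def using tr sel zY u_def by auto
  then show ?thesis by blast
qed

lemma sum_bound:
  assumes A2: "\<And>p. p \<in> Gset Y U f \<Longrightarrow> \<bar>k p\<bar> \<le> M"
    and "y \<in> Y" "u \<in> ctrlsT Y U f T y"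
  shows "\<bar>\<Sum>t<T. k (traj f y u t, u t)\<bar> \<le> real T * M"
proof -
  have "\<bar>\<Sum>t<T. k (traj f y u t, u t)\<bar> \<le> (\<Sum>t<T. \<bar>k (traj f y u t, u t)\<bar>)"
    by (rule sum_abs)
  also have "\<dots> \<le> (\<Sum>t<T. M)"
    by (rule sum_mono) (use A2 traj_G[OF assms(2,3)] in auto)
  finally show ?thesis by simp
qed

lemma SS_facts:
  assumes A1: "\<And>y. y \<in> Y \<Longrightarrow> Adm Y U f y \<noteq> {}"
    and A2: "\<And>p. p \<in> Gset Y U f \<Longrightarrow> \<bar>k p\<bar> \<le> M"
    and "y \<in> Y"
  shows "\<And>u. u \<in> ctrlsT Y U f T y \<Longrightarrow> SS Y U f k T y \<le> (\<Sum>t<T. k (traj f y u t, u t))"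
    and "\<And>c. (\<And>u. u \<in> ctrlsT Y U f T y \<Longrightarrow> c \<le> (\<Sum>t<T. k (traj f y u t, u t))) \<Longrightarrow> c \<le> SS Y U f k T y"
    and "\<bar>SS Y U f k T y\<bar> \<le> real T * M"
proof -
  have bdd: "bdd_below ((\<lambda>u. \<Sum>t<T. k (traj f y u t, u t)) ` ctrlsT Y U f T y)"
  proof (rule bdd_belowI)
    fix x assume "x \<in> (\<lambda>u. \<Sum>t<T. k (traj f y u t, u t)) ` ctrlsT Y U f T y"
    then obtain u where u: "u \<in> ctrlsT Y U f T y" and x: "x = (\<Sum>t<T. k (traj f y u t, u t))" by blast
    show "- (real T * M) \<le> x" using sum_bound[where k=k, OF A2 assms(3) u] x by linarith
  qed
  have "\<exists>u. u \<in> ctrls Y U f y" by (rule ex_ctrl) (use A1 assms(3) in auto)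
  then obtain u0 where u0: "u0 \<in> ctrlsT Y U f T y" using ctrls_sub[of Y U f y T] by blast
  show 1: "SS Y U f k T y \<le> (\<Sum>t<T. k (traj f y u t, u t))" if "u \<in> ctrlsT Y U f T y" for u
    unfolding SS_def using that bdd by (simp add: cInf_lower)
  show 2: "c \<le> SS Y U f k T y" if "\<And>u. u \<in> ctrlsT Y U f T y \<Longrightarrow> c \<le> (\<Sum>t<T. k (traj f y u t, u t))" for c
    unfolding SS_def using that u0 by (intro cInf_greatest) auto
  have "SS Y U f k T y \<le> real T * M" using 1[OF u0] sum_bound[where k=k, OF A2 assms(3) u0] by linarith
  moreover have "- (real T * M) \<le> SS Y U f k T y"
    by (rule 2) (use sum_bound[where k=k, OF A2 assms(3)] in force)
  ultimately show "\<bar>SS Y U f k T y\<bar> \<le> real T * M" by linarith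
qed


lemma traj_shift:
  "traj f y (case_nat u v) (Suc t) = traj f (f (y, u)) v t"
  by (induction t) simp_all

lemma SS_DP:
  assumes A1: "\<And>y. y \<in> Y \<Longrightarrow> Adm Y U f y \<noteq> {}"
    and A2: "\<And>p. p \<in> Gset Y U f \<Longrightarrow> \<bar>k p\<bar> \<le> M"
    and y: "y \<in> Y" and u: "u \<in> Adm Y U f y"
  shows "SS Y U f k (Suc n) y \<le> k (y, u) + SS Y U f k n (f (y, u))"
proof -
  have zY: "f (y, u) \<in> Y" using u by (simp add: Adm_def)
  have "SS Y U f k (Suc n) y - k (y, u) \<le> SS Y U f k n (f (y, u))"
  proof (rule SS_facts(2)[where k=k, OF A1 A2 zY])
    fix v assume v: "v \<in> ctrlsT Y U f n (f (y, u))"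
    define w where "w = case_nat u v"
    have w: "w \<in> ctrlsT Y U f (Suc n) y"
      unfolding ctrlsT_def
    proof (intro CollectI allI impI)
      fix t assume "t < Suc n"
      then show "w t \<in> Adm Y U f (traj f y w t)"
        using u v unfolding w_def ctrlsT_def
        by (cases t) (auto simp: traj_shift simp del: traj.simps(2))
    qed
    have "(\<Sum>t<Suc n. k (traj f y w t, w t)) = k (y, u) + (\<Sum>t<n. k (traj f (f (y, u)) v t, v t))"
      unfolding sum.lessThan_Suc_shift by (simp add: w_def traj_shift del: traj.simps(2))
    then show "SS Y U f k (Suc n) y - k (y, u) \<le> (\<Sum>t<n. k (traj f (f (y, u)) v t, v t))"
      using SS_facts(1)[where k=k, OF A1 A2 y w] by linarith
  qed
  then show ?thesis by linarith
qed

lemma SS_mono: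
  assumes A1: "\<And>y. y \<in> Y \<Longrightarrow> Adm Y U f y \<noteq> {}"
    and A2: "\<And>p. p \<in> Gset Y U f \<Longrightarrow> \<bar>k p\<bar> \<le> M"
    and z: "z \<in> Y"
  shows "SS Y U f k n z \<le> SS Y U f k (Suc n) z + M"
proof -
  have "SS Y U f k n z - M \<le> SS Y U f k (Suc n) z"
  proof (rule SS_facts(2)[where k=k, OF A1 A2 z])
    fix u assume u: "u \<in> ctrlsT Y U f (Suc n) z"
    then have u': "u \<in> ctrlsT Y U f n z" unfolding ctrlsT_def by auto
    have "\<bar>k (traj f z u n, u n)\<bar> \<le> M" using A2 traj_G[OF z u, of n] by simp
    moreover have "SS Y U f k n z \<le> (\<Sum>t<n. k (traj f z u t, u t))"
      by (rule SS_facts(1)[where k=k, OF A1 A2 z u'])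
    ultimately show "SS Y U f k n z - M \<le> (\<Sum>t<Suc n. k (traj f z u t, u t))"
      by simp
  qed
  then show ?thesis by linarith
qed

lemma SS_0: "SS Y U f k 0 y = 0"
proof -
  have "ctrlsT Y U f 0 y = UNIV" unfolding ctrlsT_def by auto
  then show ?thesis unfolding SS_def by simp
qed

lemma disc_summable:
  assumes A2: "\<And>p. p \<in> Gset Y U f \<Longrightarrow> \<bar>k p\<bar> \<le> M"
    and "y \<in> Y" "u \<in> ctrls Y U f y" "0 < (a::real)" "a < 1"
  shows "summable (\<lambda>t. a ^ t * k (traj f y u t, u t))"
    and "\<bar>\<Sum>t. a ^ t * k (traj f y u t, u t)\<bar> \<le> M / (1 - a)"
proof -
  have b: "\<bar>k (traj f y u t, u t)\<bar> \<le> M" for t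
    using A2 traj_G[OF assms(2) subsetD[OF ctrls_sub assms(3)], of t "Suc t"] by simp
  have g: "summable (\<lambda>t. M * a ^ t)" using summable_geometric[of a] assms(4,5) by (simp add: summable_mult)
  have le: "norm (a ^ t * k (traj f y u t, u t)) \<le> M * a ^ t" for t
    using b[of t] assms(4) by (simp add: abs_mult mult.commute mult_left_mono)
  have le2: "- (M * a ^ t) \<le> a ^ t * k (traj f y u t, u t)" for t
    using le[of t] unfolding real_norm_def abs_le_iff by linarith
  show s: "summable (\<lambda>t. a ^ t * k (traj f y u t, u t))"
    by (rule summable_comparison_test[OF _ g]) (use le in auto)
  have "\<bar>\<Sum>t. a ^ t * k (traj f y u t, u t)\<bar> \<le> (\<Sum>t. M * a ^ t)"
  proof -
    have g': "summable (\<lambda>t. - (M * a ^ t))" using g by (rule summable_minus)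
    have "(\<Sum>t. a ^ t * k (traj f y u t, u t)) \<le> (\<Sum>t. M * a ^ t)"
      by (rule suminf_le[OF _ s g]) (use le in \<open>auto simp: abs_le_iff\<close>)
    moreover have "(\<Sum>t. - (M * a ^ t)) \<le> (\<Sum>t. a ^ t * k (traj f y u t, u t))"
      by (rule suminf_le[OF _ g' s]) (use le2 in auto)
    moreover have "(\<Sum>t. - (M * a ^ t)) = - (\<Sum>t. M * a ^ t)" by (rule suminf_minus[OF g])
    ultimately show ?thesis by linarith
  qed
  also have "\<dots> = M / (1 - a)" using assms(4,5) by (simp add: suminf_mult suminf_geometric divide_simps)
  finally show "\<bar>\<Sum>t. a ^ t * k (traj f y u t, u t)\<bar> \<le> M / (1 - a)" .
qed

lemma HH_facts:
  assumes A1: "\<And>y. y \<in> Y \<Longrightarrow> Adm Y U f y \<noteq> {}"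
    and A2: "\<And>p. p \<in> Gset Y U f \<Longrightarrow> \<bar>k p\<bar> \<le> M"
    and y: "y \<in> Y" and a: "0 < a" "a < 1"
  shows "\<And>u. u \<in> ctrls Y U f y \<Longrightarrow> HH Y U f k a y \<le> (\<Sum>t. a ^ t * k (traj f y u t, u t))"
    and "\<And>c. (\<And>u. u \<in> ctrls Y U f y \<Longrightarrow> c \<le> (\<Sum>t. a ^ t * k (traj f y u t, u t))) \<Longrightarrow> c \<le> HH Y U f k a y"
    and "\<bar>HH Y U f k a y\<bar> \<le> M / (1 - a)"
proof -
  have bdd: "bdd_below ((\<lambda>u. \<Sum>t. a ^ t * k (traj f y u t, u t)) ` ctrls Y U f y)"
  proof (rule bdd_belowI)
    fix x assume "x \<in> (\<lambda>u. \<Sum>t. a ^ t * k (traj f y u t, u t)) ` ctrls Y U f y"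
    then obtain u where u: "u \<in> ctrls Y U f y" and x: "x = (\<Sum>t. a ^ t * k (traj f y u t, u t))" by blast
    show "- (M / (1 - a)) \<le> x" using disc_summable(2)[where k=k, OF A2 y u a] x by linarith
  qed
  obtain u0 where u0: "u0 \<in> ctrls Y U f y" using ex_ctrl[where Y=Y and U=U and f=f, OF A1 y] by blast
  show 1: "HH Y U f k a y \<le> (\<Sum>t. a ^ t * k (traj f y u t, u t))" if "u \<in> ctrls Y U f y" for u
    unfolding HH_def using that bdd by (simp add: cInf_lower)
  show 2: "c \<le> HH Y U f k a y" if "\<And>u. u \<in> ctrls Y U f y \<Longrightarrow> c \<le> (\<Sum>t. a ^ t * k (traj f y u t, u t))" for c
    unfolding HH_def using that u0 by (intro cInf_greatest) auto
  have "HH Y U f k a y \<le> M / (1 - a)" using 1[OF u0] disc_summable(2)[where k=k, OF A2 y u0 a] by linarith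
  moreover have "- (M / (1 - a)) \<le> HH Y U f k a y"
    by (rule 2) (use disc_summable(2)[where k=k, OF A2 y _ a] in force)
  ultimately show "\<bar>HH Y U f k a y\<bar> \<le> M / (1 - a)" by linarith
qed

lemma HH_DP:
  assumes A1: "\<And>y. y \<in> Y \<Longrightarrow> Adm Y U f y \<noteq> {}"
    and A2: "\<And>p. p \<in> Gset Y U f \<Longrightarrow> \<bar>k p\<bar> \<le> M"
    and y: "y \<in> Y" and u: "u \<in> Adm Y U f y" and a: "0 < a" "a < 1"
  shows "HH Y U f k a y \<le> k (y, u) + a * HH Y U f k a (f (y, u))"
proof -
  have zY: "f (y, u) \<in> Y" using u by (simp add: Adm_def)
  have "(HH Y U f k a y - k (y, u)) / a \<le> HH Y U f k a (f (y, u))"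
  proof (rule HH_facts(2)[where k=k, OF A1 A2 zY a])
    fix v assume v: "v \<in> ctrls Y U f (f (y, u))"
    define w where "w = case_nat u v"
    have w: "w \<in> ctrls Y U f y"
      unfolding ctrls_def
    proof (intro CollectI allI)
      fix t
      show "w t \<in> Adm Y U f (traj f y w t)"
        using u v unfolding w_def ctrls_def
        by (cases t) (auto simp: traj_shift simp del: traj.simps(2))
    qed
    have s: "summable (\<lambda>t. a ^ t * k (traj f y w t, w t))" by (rule disc_summable(1)[where k=k, OF A2 y w a])
    have "(\<Sum>t. a ^ t * k (traj f y w t, w t)) = k (y, u) + (\<Sum>t. a ^ Suc t * k (traj f y w (Suc t), w (Suc t)))"
      using suminf_split_head[OF s] by (simp add: w_def)
    also have "(\<Sum>t. a ^ Suc t * k (traj f y w (Suc t), w (Suc t))) = (\<Sum>t. a * (a ^ t * k (traj f (f (y, u)) v t, v t)))"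
      by (simp add: w_def traj_shift mult.assoc del: traj.simps(2))
    also have "\<dots> = a * (\<Sum>t. a ^ t * k (traj f (f (y, u)) v t, v t))"
      by (rule suminf_mult[OF disc_summable(1)[where k=k, OF A2 zY v a]])
    finally have "HH Y U f k a y \<le> k (y, u) + a * (\<Sum>t. a ^ t * k (traj f (f (y, u)) v t, v t))"
      using HH_facts(1)[where k=k, OF A1 A2 y a w] by linarith
    then show "(HH Y U f k a y - k (y, u)) / a \<le> (\<Sum>t. a ^ t * k (traj f (f (y, u)) v t, v t))"
      using a by (simp add: divide_simps mult.commute)
  qed
  then show ?thesis using a by (simp add: divide_simps mult.commute)
qed


lemma int_cont:
  assumes "finite_measure N" "sets N = sets (restrict_space borel G)"
    "continuous_on G (g :: _ \<Rightarrow> real)" "\<forall>p\<in>G. \<bar>g p\<bar> \<le> B"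
  shows "integrable N g"
proof -
  have sp: "space N = G" using sets_eq_imp_space_eq[OF assms(2)] by (simp add: space_restrict_space)
  have "g \<in> borel_measurable N"
    unfolding measurable_cong_sets[OF assms(2) refl] by (rule borel_measurable_continuous_on_restrict[OF assms(3)])
  then show ?thesis
    by (intro finite_measure.integrable_const_bound[OF assms(1), of _ B]) (auto simp: sp assms(4))
qed

lemma phi_int:
  assumes "finite_measure N" "sets N = sets (restrict_space borel G)"
    "continuous_on Y (\<phi> :: _ \<Rightarrow> real)" "\<forall>y\<in>Y. \<bar>\<phi> y\<bar> \<le> B"
    "continuous_on G f" "f ` G \<subseteq> Y" "fst ` G \<subseteq> Y"
  shows "integrable N (\<lambda>p. \<phi> (fst p))" "integrable N (\<lambda>p. \<phi> (f p))"
proof -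
  show "integrable N (\<lambda>p. \<phi> (fst p))"
    by (rule int_cont[OF assms(1,2), of _ B])
       (use assms in \<open>auto intro!: continuous_on_compose2[OF assms(3) continuous_on_fst]\<close>)
  show "integrable N (\<lambda>p. \<phi> (f p))"
    by (rule int_cont[OF assms(1,2), of _ B])
       (use assms in \<open>auto intro!: continuous_on_compose2[OF assms(3) assms(5)]\<close>)
qed

lemma W_inv:
  assumes "\<gamma> \<in> Wset Y U f"
    "continuous_on Y (\<phi> :: _ \<Rightarrow> real)" "\<forall>y\<in>Y. \<bar>\<phi> y\<bar> \<le> B"
    "continuous_on (Gset Y U f) f" "f ` Gset Y U f \<subseteq> Y" "fst ` Gset Y U f \<subseteq> Y"
  shows "integral\<^sup>L \<gamma> (\<lambda>p. \<phi> (f p)) = integral\<^sup>L \<gamma> (\<lambda>p. \<phi> (fst p))"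
proof -
  have g: "prob_space \<gamma>" "sets \<gamma> = sets (restrict_space borel (Gset Y U f))"
    "integral\<^sup>L \<gamma> (\<lambda>p. \<phi> (f p) - \<phi> (fst p)) = 0"
    using assms(1,2) unfolding Wset_def by auto
  have fm: "finite_measure \<gamma>" using g(1) by (simp add: prob_space_def)
  note i = phi_int[OF fm g(2) assms(2,3,4,5,6)]
  show ?thesis using g(3) i by simp
qed

lemma kstar_core:
  assumes "\<gamma> \<in> Wset Y U f" "finite_measure \<xi>" "sets \<xi> = sets (restrict_space borel (Gset Y U f))"
    "integral\<^sup>L \<gamma> (\<lambda>p. \<phi> y0 - \<phi> (fst p)) + integral\<^sup>L \<xi> (\<lambda>p. \<phi> (f p) - \<phi> (fst p)) = 0"
    "continuous_on Y (\<phi> :: _ \<Rightarrow> real)" "\<forall>y\<in>Y. \<bar>\<phi> y\<bar> \<le> B"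
    "continuous_on (Gset Y U f) f" "f ` Gset Y U f \<subseteq> Y" "fst ` Gset Y U f \<subseteq> Y"
    "\<forall>p\<in>Gset Y U f. \<phi> (fst p) - \<phi> (f p) \<le> D"
  shows "\<phi> y0 \<le> integral\<^sup>L \<gamma> (\<lambda>p. \<phi> (fst p)) + D * measure \<xi> (space \<xi>)"
proof -
  have g: "prob_space \<gamma>" "sets \<gamma> = sets (restrict_space borel (Gset Y U f))"
    using assms(1) unfolding Wset_def by auto
  have fm: "finite_measure \<gamma>" using g(1) by (simp add: prob_space_def)
  note i = phi_int[OF fm g(2) assms(5,6,7,8,9)]
  note j = phi_int[OF assms(2,3,5,6,7,8,9)]
  have sp: "space \<xi> = Gset Y U f" using sets_eq_imp_space_eq[OF assms(3)] by (simp add: space_restrict_space)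
  have e1: "integral\<^sup>L \<gamma> (\<lambda>p. \<phi> y0 - \<phi> (fst p)) = \<phi> y0 - integral\<^sup>L \<gamma> (\<lambda>p. \<phi> (fst p))"
  proof -
    have "integrable \<gamma> (\<lambda>p. \<phi> y0)" using fm by (rule finite_measure.integrable_const)
    then show ?thesis using i(1) g(1) by (simp add: prob_space.prob_space)
  qed
  have "integral\<^sup>L \<xi> (\<lambda>p. \<phi> (fst p) - \<phi> (f p)) \<le> integral\<^sup>L \<xi> (\<lambda>p. D)"
    by (rule integral_mono) (use j assms(2,10) sp in \<open>auto simp: finite_measure.integrable_const\<close>)
  moreover have "integral\<^sup>L \<xi> (\<lambda>p. \<phi> (fst p) - \<phi> (f p)) = - integral\<^sup>L \<xi> (\<lambda>p. \<phi> (f p) - \<phi> (fst p))"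
    using j by simp
  ultimately show ?thesis using assms(4) e1 by (simp add: mult.commute)
qed

theorem theorem3p1:
  fixes Y :: "'a::euclidean_space set"
    and U0 :: "'b::metric_space set"
    and U :: "'a \<Rightarrow> 'b set"
    and f :: "'a \<times> 'b \<Rightarrow> 'a"
    and k :: "'a \<times> 'b \<Rightarrow> real"
  assumes "Y \<noteq> {}" and "compact Y"
    and "compact U0"
    and "\<And>y. y \<in> Y \<Longrightarrow> U y \<subseteq> U0"
    and "\<And>y. y \<in> Y \<Longrightarrow> compact (U y)"
    and "usc_on Y U"
    and "continuous_on (UNIV \<times> U0) f"
    and "continuous_on (UNIV \<times> U0) k"
    and "\<And>y. y \<in> Y \<Longrightarrow> Adm Y U f y \<noteq> {}"
  shows "((\<forall>T::nat. T \<ge> 1 \<longrightarrow> continuous_on Y (VT Y U f k T)) \<longrightarrow>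
            (\<forall>y0\<in>Y. limsup (\<lambda>T. ereal (VT Y U f k T y0)) \<le> kstar Y U f k y0))
       \<and> ((\<forall>\<alpha>::real. 0 < \<alpha> \<and> \<alpha> < 1 \<longrightarrow> continuous_on Y (hdisc Y U f k \<alpha>)) \<longrightarrow>
            (\<forall>y0\<in>Y. Limsup (at_left 1) (\<lambda>\<alpha>. ereal (hdisc Y U f k \<alpha> y0)) \<le> kstar Y U f k y0))"
proof -
  let ?G = "Gset Y U f"
  note A1 = assms(9)
  have GY: "?G \<subseteq> Y \<times> U0" using assms(4) unfolding Gset_def Adm_def by auto
  have fG: "f ` ?G \<subseteq> Y" unfolding Gset_def Adm_def by auto
  have fstG: "fst ` ?G \<subseteq> Y" unfolding Gset_def by auto
  have cf: "continuous_on ?G f" by (rule continuous_on_subset[OF assms(7)]) (use GY in auto)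
  have ck: "continuous_on ?G k" by (rule continuous_on_subset[OF assms(8)]) (use GY in auto)
  have "compact (k ` (Y \<times> U0))"
    by (rule compact_continuous_image) (use continuous_on_subset[OF assms(8), of "Y \<times> U0"] compact_Times[OF assms(2,3)] in auto)
  then obtain M0 where M0: "\<forall>x\<in>k ` (Y \<times> U0). norm x \<le> M0"
    using compact_imp_bounded bounded_iff by metis
  define M where "M = max M0 0"
  have M0le: "M \<ge> 0" unfolding M_def by simp
  have A2: "\<bar>k p\<bar> \<le> M" if "p \<in> ?G" for p
    using M0 GY that unfolding M_def by force
  show ?thesis
  proof (intro conjI impI ballI)
    fix y0 assume cont: "\<forall>T::nat. T \<ge> 1 \<longrightarrow> continuous_on Y (VT Y U f k T)" and y0: "y0 \<in> Y"
    have SSc: "continuous_on Y (SS Y U f k n)" for n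
    proof (cases "n = 0")
      case True
      then show ?thesis by (simp add: SS_0)
    next
      case False
      then have "SS Y U f k n = (\<lambda>y. real n * VT Y U f k n y)"
        by (intro ext) (simp add: VT_def SS_def)
      then show ?thesis using cont False by (auto intro!: continuous_on_mult[OF continuous_on_const])
    qed
    have SSb: "\<forall>y\<in>Y. \<bar>SS Y U f k n y\<bar> \<le> real n * M" for n
      using SS_facts(3)[where k=k, OF A1 A2] by blast
    show "limsup (\<lambda>T. ereal (VT Y U f k T y0)) \<le> kstar Y U f k y0"
      unfolding kstar_def
    proof (rule Inf_greatest)
      fix x assume "x \<in> {ereal (integral\<^sup>L \<gamma> k) | \<gamma> \<xi>.
      \<gamma> \<in> Wset Y U f \<and> finite_measure \<xi> \<and>
      sets \<xi> = sets (restrict_space borel (Gset Y U f)) \<and>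
      (\<forall>\<phi>::'a \<Rightarrow> real. continuous_on Y \<phi> \<longrightarrow>
         integral\<^sup>L \<gamma> (\<lambda>p. \<phi> y0 - \<phi> (fst p)) + integral\<^sup>L \<xi> (\<lambda>p. \<phi> (f p) - \<phi> (fst p)) = 0)}"
      then obtain \<gamma> \<xi> where x: "x = ereal (integral\<^sup>L \<gamma> k)" and gW: "\<gamma> \<in> Wset Y U f"
        and xi: "finite_measure \<xi>" "sets \<xi> = sets (restrict_space borel (Gset Y U f))"
        and eq: "\<And>\<phi>::'a \<Rightarrow> real. continuous_on Y \<phi> \<Longrightarrow>
         integral\<^sup>L \<gamma> (\<lambda>p. \<phi> y0 - \<phi> (fst p)) + integral\<^sup>L \<xi> (\<lambda>p. \<phi> (f p) - \<phi> (fst p)) = 0"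
        by blast
      define c where "c = integral\<^sup>L \<gamma> k"
      define m where "m = measure \<xi> (space \<xi>)"
      have g: "prob_space \<gamma>" "sets \<gamma> = sets (restrict_space borel ?G)"
        using gW unfolding Wset_def by auto
      have fm: "finite_measure \<gamma>" using g(1) by (simp add: prob_space_def)
      have spg: "space \<gamma> = ?G" using sets_eq_imp_space_eq[OF g(2)] by (simp add: space_restrict_space)
      have ik: "integrable \<gamma> k" by (rule int_cont[OF fm g(2) ck, of M]) (use A2 in auto)
      have I: "integral\<^sup>L \<gamma> (\<lambda>p. SS Y U f k n (fst p)) \<le> real n * c" for n
      proof (induction n)
        case 0 then show ?case by (simp add: SS_0)
      next
        case (Suc n)
        note i1 = phi_int[OF fm g(2) SSc SSb cf fG fstG, of n]
        note i2 = phi_int[OF fm g(2) SSc SSb cf fG fstG, of "Suc n"]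
        have "integral\<^sup>L \<gamma> (\<lambda>p. SS Y U f k (Suc n) (fst p)) \<le> integral\<^sup>L \<gamma> (\<lambda>p. k p + SS Y U f k n (f p))"
        proof (rule integral_mono)
          show "integrable \<gamma> (\<lambda>p. k p + SS Y U f k n (f p))" using ik i1 by simp
          show "integrable \<gamma> (\<lambda>p. SS Y U f k (Suc n) (fst p))" using i2 by simp
          fix p assume "p \<in> space \<gamma>"
          then obtain y u where p: "p = (y, u)" "y \<in> Y" "u \<in> Adm Y U f y"
            using spg unfolding Gset_def by auto
          show "SS Y U f k (Suc n) (fst p) \<le> k p + SS Y U f k n (f p)"
            using SS_DP[where k=k, OF A1 A2 p(2,3)] p(1) by simp
        qed
        also have "\<dots> = c + integral\<^sup>L \<gamma> (\<lambda>p. SS Y U f k n (f p))"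
          using ik i1 by (simp add: c_def)
        also have "integral\<^sup>L \<gamma> (\<lambda>p. SS Y U f k n (f p)) = integral\<^sup>L \<gamma> (\<lambda>p. SS Y U f k n (fst p))"
          by (rule W_inv[OF gW SSc SSb cf fG fstG])
        finally show ?case using Suc.IH by (simp add: algebra_simps)
      qed
      have bnd: "VT Y U f k T y0 \<le> c + 2 * M * m / real T" if T: "T \<ge> 1" for T
      proof -
        obtain n where n: "T = Suc n" using T by (cases T) auto
        have D: "\<forall>p\<in>?G. SS Y U f k T (fst p) - SS Y U f k T (f p) \<le> 2 * M"
        proof
          fix p assume "p \<in> ?G"
          then obtain y u where p: "p = (y, u)" "y \<in> Y" "u \<in> Adm Y U f y"
            unfolding Gset_def by auto
          have fy: "f (y, u) \<in> Y" using p(3) by (simp add: Adm_def)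
          show "SS Y U f k T (fst p) - SS Y U f k T (f p) \<le> 2 * M"
            using SS_DP[where k=k, OF A1 A2 p(2,3), of n] SS_mono[where k=k, OF A1 A2 fy, of n] A2[OF \<open>p \<in> ?G\<close>] p(1) n
            by simp
        qed
        have "SS Y U f k T y0 \<le> integral\<^sup>L \<gamma> (\<lambda>p. SS Y U f k T (fst p)) + 2 * M * m"
          using kstar_core[OF gW xi eq[OF SSc] SSc SSb cf fG fstG D] by (simp add: m_def)
        also have "\<dots> \<le> real T * c + 2 * M * m" using I[of T] by simp
        finally have "SS Y U f k T y0 \<le> real T * c + 2 * M * m" .
        then have "SS Y U f k T y0 / real T \<le> (real T * c + 2 * M * m) / real T"
          using T by (intro divide_right_mono) auto
        moreover have "VT Y U f k T y0 = SS Y U f k T y0 / real T" by (simp add: VT_def SS_def)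
        moreover have "(real T * c + 2 * M * m) / real T = c + 2 * M * m / real T"
          using T by (simp add: field_simps)
        ultimately show ?thesis by simp
      qed
      have ev: "eventually (\<lambda>T. ereal (VT Y U f k T y0) \<le> ereal (c + 2 * M * m / real T)) sequentially"
        using bnd by (intro eventually_sequentiallyI[of 1]) auto
      have "((\<lambda>T. c + 2 * M * m / real T) \<longlongrightarrow> c + 0) sequentially"
        by (intro tendsto_add tendsto_const lim_const_over_n)
      then have lim: "((\<lambda>T. ereal (c + 2 * M * m / real T)) \<longlongrightarrow> ereal c) sequentially"
        by (intro tendsto_ereal) simp
      have "limsup (\<lambda>T. ereal (VT Y U f k T y0)) \<le> limsup (\<lambda>T. ereal (c + 2 * M * m / real T))"
        by (rule Limsup_mono[OF ev])
      also have "\<dots> = ereal c" by (rule lim_imp_Limsup[OF trivial_limit_sequentially lim])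
      finally show "limsup (\<lambda>T. ereal (VT Y U f k T y0)) \<le> x" by (simp add: x c_def)
    qed
  next
    fix y0 assume cont: "\<forall>\<alpha>::real. 0 < \<alpha> \<and> \<alpha> < 1 \<longrightarrow> continuous_on Y (hdisc Y U f k \<alpha>)" and y0: "y0 \<in> Y"
    show "Limsup (at_left 1) (\<lambda>\<alpha>. ereal (hdisc Y U f k \<alpha> y0)) \<le> kstar Y U f k y0"
      unfolding kstar_def
    proof (rule Inf_greatest)
      fix x assume "x \<in> {ereal (integral\<^sup>L \<gamma> k) | \<gamma> \<xi>.
      \<gamma> \<in> Wset Y U f \<and> finite_measure \<xi> \<and>
      sets \<xi> = sets (restrict_space borel (Gset Y U f)) \<and>
      (\<forall>\<phi>::'a \<Rightarrow> real. continuous_on Y \<phi> \<longrightarrow>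
         integral\<^sup>L \<gamma> (\<lambda>p. \<phi> y0 - \<phi> (fst p)) + integral\<^sup>L \<xi> (\<lambda>p. \<phi> (f p) - \<phi> (fst p)) = 0)}"
      then obtain \<gamma> \<xi> where x: "x = ereal (integral\<^sup>L \<gamma> k)" and gW: "\<gamma> \<in> Wset Y U f"
        and xi: "finite_measure \<xi>" "sets \<xi> = sets (restrict_space borel (Gset Y U f))"
        and eq: "\<And>\<phi>::'a \<Rightarrow> real. continuous_on Y \<phi> \<Longrightarrow>
         integral\<^sup>L \<gamma> (\<lambda>p. \<phi> y0 - \<phi> (fst p)) + integral\<^sup>L \<xi> (\<lambda>p. \<phi> (f p) - \<phi> (fst p)) = 0"
        by blast
      define c where "c = integral\<^sup>L \<gamma> k"
      define m where "m = measure \<xi> (space \<xi>)"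
      have g: "prob_space \<gamma>" "sets \<gamma> = sets (restrict_space borel ?G)"
        using gW unfolding Wset_def by auto
      have fm: "finite_measure \<gamma>" using g(1) by (simp add: prob_space_def)
      have spg: "space \<gamma> = ?G" using sets_eq_imp_space_eq[OF g(2)] by (simp add: space_restrict_space)
      have ik: "integrable \<gamma> k" by (rule int_cont[OF fm g(2) ck, of M]) (use A2 in auto)
      have bnd: "hdisc Y U f k a y0 \<le> c + (1 - a) * (2 * M * m)" if a: "0 < a" "a < 1" for a
      proof -
        have HHc: "continuous_on Y (HH Y U f k a)"
        proof -
          have "HH Y U f k a = (\<lambda>y. (1 / (1 - a)) * hdisc Y U f k a y)"
            using a by (intro ext) (simp add: hdisc_def HH_def)
          then show ?thesis using cont a by (auto intro!: continuous_on_divide continuous_on_const)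
        qed
        have HHb: "\<forall>y\<in>Y. \<bar>HH Y U f k a y\<bar> \<le> M / (1 - a)"
          using HH_facts(3)[where k=k, OF A1 A2 _ a] by blast
        note i1 = phi_int[OF fm g(2) HHc HHb cf fG fstG]
        have "integral\<^sup>L \<gamma> (\<lambda>p. HH Y U f k a (fst p)) \<le> integral\<^sup>L \<gamma> (\<lambda>p. k p + a * HH Y U f k a (f p))"
        proof (rule integral_mono)
          show "integrable \<gamma> (\<lambda>p. k p + a * HH Y U f k a (f p))" using ik i1 by simp
          show "integrable \<gamma> (\<lambda>p. HH Y U f k a (fst p))" using i1 by simp
          fix p assume "p \<in> space \<gamma>"
          then obtain y u where p: "p = (y, u)" "y \<in> Y" "u \<in> Adm Y U f y"
            using spg unfolding Gset_def by auto
          show "HH Y U f k a (fst p) \<le> k p + a * HH Y U f k a (f p)"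
            using HH_DP[where k=k, OF A1 A2 p(2,3) a] p(1) by simp
        qed
        also have "\<dots> = c + a * integral\<^sup>L \<gamma> (\<lambda>p. HH Y U f k a (f p))"
          using ik i1 by (simp add: c_def)
        also have "integral\<^sup>L \<gamma> (\<lambda>p. HH Y U f k a (f p)) = integral\<^sup>L \<gamma> (\<lambda>p. HH Y U f k a (fst p))"
          by (rule W_inv[OF gW HHc HHb cf fG fstG])
        finally have J: "(1 - a) * integral\<^sup>L \<gamma> (\<lambda>p. HH Y U f k a (fst p)) \<le> c"
          by (simp add: algebra_simps)
        have D: "\<forall>p\<in>?G. HH Y U f k a (fst p) - HH Y U f k a (f p) \<le> 2 * M"
        proof
          fix p assume "p \<in> ?G"
          then obtain y u where p: "p = (y, u)" "y \<in> Y" "u \<in> Adm Y U f y"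
            unfolding Gset_def by auto
          have fy: "f (y, u) \<in> Y" using p(3) by (simp add: Adm_def)
          have "\<bar>HH Y U f k a (f (y, u))\<bar> * (1 - a) \<le> M"
            using HHb fy a by (simp add: pos_le_divide_eq[symmetric])
          then have "- M \<le> (1 - a) * HH Y U f k a (f (y, u))"
          proof -
            have "(1 - a) * (- \<bar>HH Y U f k a (f (y, u))\<bar>) \<le> (1 - a) * HH Y U f k a (f (y, u))"
              by (rule mult_left_mono) (use a in auto)
            moreover have "(1 - a) * (- \<bar>HH Y U f k a (f (y, u))\<bar>) = - (\<bar>HH Y U f k a (f (y, u))\<bar> * (1 - a))"
              by simp
            ultimately show ?thesis using \<open>\<bar>HH Y U f k a (f (y, u))\<bar> * (1 - a) \<le> M\<close> by linarith
          qed
          then show "HH Y U f k a (fst p) - HH Y U f k a (f p) \<le> 2 * M"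
          proof -
            have e: "(1 - a) * HH Y U f k a (f (y, u)) = HH Y U f k a (f (y, u)) - a * HH Y U f k a (f (y, u))"
              by (simp add: algebra_simps)
            have "\<bar>k (y, u)\<bar> \<le> M" using A2[OF \<open>p \<in> ?G\<close>] p(1) by simp
            then show ?thesis
              using HH_DP[where k=k, OF A1 A2 p(2,3) a] p(1) e \<open>- M \<le> (1 - a) * HH Y U f k a (f (y, u))\<close>
              by simp
          qed
        qed
        have "HH Y U f k a y0 \<le> integral\<^sup>L \<gamma> (\<lambda>p. HH Y U f k a (fst p)) + 2 * M * m"
          using kstar_core[OF gW xi eq[OF HHc] HHc HHb cf fG fstG D] by (simp add: m_def)
        then have "(1 - a) * HH Y U f k a y0 \<le> (1 - a) * (integral\<^sup>L \<gamma> (\<lambda>p. HH Y U f k a (fst p)) + 2 * M * m)"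
          using a by (intro mult_left_mono) auto
        also have "\<dots> \<le> c + (1 - a) * (2 * M * m)" using J by (simp add: algebra_simps)
        finally show ?thesis by (simp add: hdisc_def HH_def)
      qed
      have ev: "eventually (\<lambda>a. ereal (hdisc Y U f k a y0) \<le> ereal (c + (1 - a) * (2 * M * m))) (at_left 1)"
      proof -
        have "eventually (\<lambda>a. a \<in> {0<..<1}) (at_left (1::real))"
          by (rule eventually_at_left_real) simp
        then show ?thesis by (rule eventually_mono) (use bnd in auto)
      qed
      have "((\<lambda>a. c + (1 - a) * (2 * M * m)) \<longlongrightarrow> c + (1 - 1) * (2 * M * m)) (at_left (1::real))"
        by (intro tendsto_intros)
      then have lim: "((\<lambda>a. ereal (c + (1 - a) * (2 * M * m))) \<longlongrightarrow> ereal c) (at_left (1::real))"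
        by (intro tendsto_ereal) simp
      have "Limsup (at_left 1) (\<lambda>a. ereal (hdisc Y U f k a y0)) \<le> Limsup (at_left 1) (\<lambda>a. ereal (c + (1 - a) * (2 * M * m)))"
        by (rule Limsup_mono[OF ev])
      also have "\<dots> = ereal c" by (rule lim_imp_Limsup[OF trivial_limit_at_left_real lim])
      finally show "Limsup (at_left 1) (\<lambda>a. ereal (hdisc Y U f k a y0)) \<le> x" by (simp add: x c_def)
    qed
  qed
qed

end
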